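(* Under the standing setup, for all $t\in(0,1)$ and $x\in\mathbb R^d$, $$\frac{\sigma^2\alpha_t^2}{\alpha_t^2+\sigma^2\beta_t^2}I_d\preceq\mathrm{Cov}(X_1\mid X_t=x)\preceq\frac{\sigma^2\alpha_t^2}{\alpha_t^2+\sigma^2\beta_t^2}I_d+d\Big(\frac{\alpha_t^2}{\alpha_t^2+\sigma^2\beta_t^2}\Big)^2I_d.$$
   Context: Standing setup. Let $d\ge1$, $\mu_0=N(0,I_d)$. There are $\sigma>0$ and a probability measure $\nu$ on $\mathbb R^d$ with a density and $\mathrm{supp}(\nu)\subseteq[0,1]^d$ such that $\mu_1=N(0,\sigma^2I_d)*\nu$. The coefficients $\alpha,\beta:[0,1]\to\mathbb R$ satisfy: $\alpha,\beta\in C([0,1])$; $\alpha(0)=\beta(1)=1$, $\alpha(1)=\beta(0)=0$; $\alpha^2+\beta^2>0$ on $[0,1]$; $\alpha$ nonincreasing, $\beta$ nondecreasing, $\alpha_t,\beta_t>0$ on $(0,1)$; $\dot\alpha,\ddot\alpha\in C([0,1))$, $\alpha\dot\alpha\in C^1([0,1])$, $\dot\beta,\ddot\beta\in C([0,1])$. Let $X_0\sim\mu_0$, $X_1\sim\mu_1$ be independent and $X_t=\alpha_tX_0+\beta_tX_1$. $A\preceq B$ means $B-A$ is positive semidefinite. *)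

theory Defs
  imports "HOL-Probability.Probability"
begin

definition gauss_vec :: "real \<Rightarrow> real^'n \<Rightarrow> real" where
  "gauss_vec s x = (\<Prod>i\<in>UNIV. normal_density 0 s (x $ i))"

text \<open>Density (w.r.t. Lebesgue measure) of mu_1 = N(0, sigma^2 I_d) * nu.\<close>
definition mu1_density :: "real \<Rightarrow> (real^'n) measure \<Rightarrow> real^'n \<Rightarrow> real" where
  "mu1_density \<sigma> \<nu> y = (\<integral>z. gauss_vec \<sigma> (y - z) \<partial>\<nu>)"

text \<open>Joint density of (X_t, X_1) at (x, y), where X_t = alpha_t X_0 + beta_t X_1,
  X_0 ~ N(0, I_d) independent of X_1 ~ mu_1.\<close>
definition joint_density ::
  "(real \<Rightarrow> real) \<Rightarrow> (real \<Rightarrow> real) \<Rightarrow> real \<Rightarrow> (real^'n) measure \<Rightarrow> real \<Rightarrow> real^'n \<Rightarrow> real^'n \<Rightarrow> real" where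
  "joint_density \<alpha> \<beta> \<sigma> \<nu> t x y = mu1_density \<sigma> \<nu> y * gauss_vec (\<alpha> t) (x - \<beta> t *\<^sub>R y)"

definition cond_density ::
  "(real \<Rightarrow> real) \<Rightarrow> (real \<Rightarrow> real) \<Rightarrow> real \<Rightarrow> (real^'n) measure \<Rightarrow> real \<Rightarrow> real^'n \<Rightarrow> real^'n \<Rightarrow> real" where
  "cond_density \<alpha> \<beta> \<sigma> \<nu> t x y =
     joint_density \<alpha> \<beta> \<sigma> \<nu> t x y / (\<integral>y'. joint_density \<alpha> \<beta> \<sigma> \<nu> t x y' \<partial>lborel)"

definition cond_mean ::
  "(real \<Rightarrow> real) \<Rightarrow> (real \<Rightarrow> real) \<Rightarrow> real \<Rightarrow> (real^'n) measure \<Rightarrow> real \<Rightarrow> real^'n \<Rightarrow> real^'n" where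
  "cond_mean \<alpha> \<beta> \<sigma> \<nu> t x = (\<chi> i. \<integral>y. y $ i * cond_density \<alpha> \<beta> \<sigma> \<nu> t x y \<partial>lborel)"

definition cond_cov ::
  "(real \<Rightarrow> real) \<Rightarrow> (real \<Rightarrow> real) \<Rightarrow> real \<Rightarrow> (real^'n) measure \<Rightarrow> real \<Rightarrow> real^'n \<Rightarrow> real^'n^'n" where
  "cond_cov \<alpha> \<beta> \<sigma> \<nu> t x =
     (let m = cond_mean \<alpha> \<beta> \<sigma> \<nu> t x in
      (\<chi> i j. \<integral>y. (y $ i - m $ i) * (y $ j - m $ j) * cond_density \<alpha> \<beta> \<sigma> \<nu> t x y \<partial>lborel))"

definition psd :: "real^'n^'n \<Rightarrow> bool" where
  "psd M \<longleftrightarrow> (\<forall>v. 0 \<le> v \<bullet> (M *v v))"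

definition loewner_le :: "real^'n^'n \<Rightarrow> real^'n^'n \<Rightarrow> bool" (infix "\<preceq>\<^sub>L" 50) where
  "A \<preceq>\<^sub>L B \<longleftrightarrow> psd (B - A)"

end

theory Submission
  imports Defs
begin



lemma Basis_vec_range: "(Basis :: (real^'n) set) = range (\<lambda>k. axis k 1)"
  by (auto simp: Basis_vec_def)

lemma sum_axis_nth: "(\<Sum>b\<in>(Basis::(real^'n) set). f b *\<^sub>R b) $ k = f (axis k 1)"
proof -
  have "(\<Sum>b\<in>(Basis::(real^'n) set). f b *\<^sub>R b) $ k = (\<Sum>b\<in>Basis. f b * (b $ k))"
    by (simp add: sum_component)
  also have "\<dots> = (\<Sum>b\<in>Basis. if b = axis k 1 then f b else 0)"
    by (intro sum.cong) (auto simp: Basis_vec_range axis_eq_axis axis_def split: if_splits)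
  also have "\<dots> = f (axis k 1)" by (simp add: Basis_vec_range)
  finally show ?thesis .
qed

lemma vec_prod_lborel:
  fixes \<phi> :: "'n::finite \<Rightarrow> real \<Rightarrow> real"
  assumes int: "\<And>k. integrable lborel (\<phi> k)"
  shows "integrable lborel (\<lambda>y::real^'n. \<Prod>k\<in>UNIV. \<phi> k (y$k))"
    and "(\<integral>y. (\<Prod>k\<in>UNIV. \<phi> k (y$k)) \<partial>(lborel::(real^'n) measure)) = (\<Prod>k\<in>UNIV. integral\<^sup>L lborel (\<phi> k))"
proof -
  interpret product_sigma_finite "\<lambda>_::real^'n. lborel::real measure" by standard
  define idx where "idx = (\<lambda>b::real^'n. THE k. b = axis k 1)"
  have idx: "idx (axis k 1) = k" for k
    unfolding idx_def by (rule the_equality) (auto simp: axis_eq_axis)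
  have inj: "inj (\<lambda>k::'n. axis k (1::real))" by (auto intro: injI simp: axis_eq_axis)
  have Tm: "(\<lambda>f::real^'n \<Rightarrow> real. \<Sum>b\<in>Basis. f b *\<^sub>R b) \<in> measurable (\<Pi>\<^sub>M b\<in>Basis. lborel) borel" by measurable
  have eq: "(\<Prod>k\<in>UNIV. \<phi> k ((\<Sum>b\<in>Basis. f b *\<^sub>R b) $ k)) = (\<Prod>b\<in>Basis. \<phi> (idx b) (f b))" for f
    unfolding sum_axis_nth[of f] unfolding Basis_vec_range
    by (subst prod.reindex[OF inj]) (simp add: idx)
  have intB: "integrable lborel (\<phi> (idx b))" for b using int by blast
  have m: "(\<lambda>y::real^'n. \<Prod>k\<in>UNIV. \<phi> k (y$k)) \<in> borel_measurable borel"
    using int by measurable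
  show "integrable lborel (\<lambda>y::real^'n. \<Prod>k\<in>UNIV. \<phi> k (y$k))"
    apply (subst lborel_eq)
    apply (subst integrable_distr_eq[OF Tm m])
    unfolding eq by (rule product_integrable_prod) (auto intro: intB)
  have "(\<integral>y. (\<Prod>k\<in>UNIV. \<phi> k (y$k)) \<partial>(lborel::(real^'n) measure))
      = (\<integral>f. (\<Prod>k\<in>UNIV. \<phi> k ((\<Sum>b\<in>Basis. f b *\<^sub>R b) $ k)) \<partial>(\<Pi>\<^sub>M b\<in>Basis. lborel))"
    apply (subst lborel_eq)
    apply (subst integral_distr[OF Tm m])
    by simp
  also have "\<dots> = (\<Prod>b\<in>Basis. integral\<^sup>L lborel (\<phi> (idx b)))"
    unfolding eq by (rule product_integral_prod) (auto intro: intB)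
  also have "\<dots> = (\<Prod>k\<in>UNIV. integral\<^sup>L lborel (\<phi> k))"
    unfolding Basis_vec_range by (subst prod.reindex[OF inj]) (simp add: idx)
  finally show "(\<integral>y. (\<Prod>k\<in>UNIV. \<phi> k (y$k)) \<partial>(lborel::(real^'n) measure)) = (\<Prod>k\<in>UNIV. integral\<^sup>L lborel (\<phi> k))" .
qed




lemma nd_0:
  assumes s: "s > 0"
  shows "has_bochner_integral lborel (normal_density \<mu> s) 1"
  using integrable_normal_density[OF s] integral_normal_density[OF s] by (simp add: has_bochner_integral_iff)

lemma nd_lin:
  assumes s: "s > 0"
  shows "has_bochner_integral lborel (\<lambda>t. (t - w) * normal_density \<mu> s t) (\<mu> - w)"
proof -
  have "has_bochner_integral lborel (\<lambda>t. normal_density \<mu> s t * t - w * normal_density \<mu> s t) (\<mu> - w * 1)"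
    apply (rule has_bochner_integral_diff)
     apply (rule normal_moment_nz_1[OF s])
    by (rule has_bochner_integral_mult_right, rule nd_0[OF s])
  then show ?thesis by (rule has_bochner_integral_cong[THEN iffD1, rotated -1]) (auto simp: algebra_simps)
qed

lemma nd_sq:
  assumes s: "s > 0"
  shows "has_bochner_integral lborel (\<lambda>t. (t - w) * (t - w) * normal_density \<mu> s t) (s\<^sup>2 + (\<mu> - w)\<^sup>2)"
proof -
  have h1: "has_bochner_integral lborel (\<lambda>x. normal_density \<mu> s x * (x - \<mu>) ^ 2) (s\<^sup>2)"
    using normal_moment_even[OF s, of \<mu> 1] by (simp add: power2_eq_square)
  have h0: "has_bochner_integral lborel (normal_density \<mu> s) 1"
    by (rule nd_0[OF s])
  have h2: "has_bochner_integral lborel (\<lambda>t. (t - \<mu>) * normal_density \<mu> s t) 0"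
    using nd_lin[OF s, of \<mu> \<mu>] by simp
  have "has_bochner_integral lborel (\<lambda>t. normal_density \<mu> s t * (t - \<mu>) ^ 2 + (2 * (\<mu> - w)) * ((t - \<mu>) * normal_density \<mu> s t) + (\<mu> - w)\<^sup>2 * normal_density \<mu> s t)
     (s\<^sup>2 + (2 * (\<mu> - w)) * 0 + (\<mu> - w)\<^sup>2 * 1)"
    by (intro has_bochner_integral_add has_bochner_integral_mult_right h0 h1 h2)
  then show ?thesis by (rule has_bochner_integral_cong[THEN iffD1, rotated -1]) (auto simp: algebra_simps power2_eq_square)
qed

definition Gv :: "real \<Rightarrow> real^'n \<Rightarrow> real^'n \<Rightarrow> real" where
  "Gv s m y = (\<Prod>k\<in>UNIV. normal_density (m$k) s (y$k))"

lemma Gv_0: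
  assumes s: "s > 0"
  shows "integrable lborel (Gv s m)" "(\<integral>y. Gv s m y \<partial>lborel) = 1"
  unfolding Gv_def using vec_prod_lborel[of "\<lambda>k. normal_density (m$k) s"] s by auto

lemma Gv_2:
  assumes s: "s > 0"
  shows "integrable lborel (\<lambda>y. (y$i - w$i) * (y$j - w$j) * Gv s m y)"
    "(\<integral>y. (y$i - w$i) * (y$j - w$j) * Gv s m y \<partial>lborel) = (if i = j then s\<^sup>2 else 0) + (m$i - w$i) * (m$j - w$j)"
proof -
  define \<phi> where "\<phi> = (\<lambda>k t. (if k = i then t - w$i else 1) * (if k = j then t - w$j else 1) * normal_density (m$k) s t)"
  have I: "has_bochner_integral lborel (\<phi> k) (if k = i \<and> k = j then s\<^sup>2 + (m$k - w$k)\<^sup>2 else if k = i then m$i - w$i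
     else if k = j then m$j - w$j else 1)" for k
  proof -
    consider "k = i" "k = j" | "k = i" "k \<noteq> j" | "k \<noteq> i" "k = j" | "k \<noteq> i" "k \<noteq> j" by blast
    then show ?thesis
    proof cases
      case 1 then show ?thesis unfolding \<phi>_def using nd_sq[OF s, of "w$k" "m$k"] by simp
    next
      case 2 then show ?thesis unfolding \<phi>_def using nd_lin[OF s, of "w$i" "m$i"] by simp
    next
      case 3 then show ?thesis unfolding \<phi>_def using nd_lin[OF s, of "w$j" "m$j"] by simp
    next
      case 4 then show ?thesis unfolding \<phi>_def
        using nd_0[OF s, of "m$k"] by simp
    qed
  qed
  have eq: "(\<Prod>k\<in>UNIV. \<phi> k (y$k)) = (y$i - w$i) * (y$j - w$j) * Gv s m y" for y
    unfolding \<phi>_def Gv_def prod.distrib by (simp add: prod.delta)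
  have intk: "integrable lborel (\<phi> k)" for k using I[of k] has_bochner_integral_iff by blast
  from vec_prod_lborel[of \<phi>, OF intk] eq
  show "integrable lborel (\<lambda>y. (y$i - w$i) * (y$j - w$j) * Gv s m y)" by simp
  have "(\<integral>y. (y$i - w$i) * (y$j - w$j) * Gv s m y \<partial>lborel) = (\<Prod>k\<in>UNIV. integral\<^sup>L lborel (\<phi> k))"
    using vec_prod_lborel(2)[of \<phi>, OF intk] eq by simp
  also have "\<dots> = (\<Prod>k\<in>UNIV. (if k = i \<and> k = j then s\<^sup>2 + (m$k - w$k)\<^sup>2 else if k = i then m$i - w$i
     else if k = j then m$j - w$j else 1))"
    by (intro prod.cong refl has_bochner_integral_integral_eq[OF I])
  also have "\<dots> = (if i = j then s\<^sup>2 else 0) + (m$i - w$i) * (m$j - w$j)"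
  proof (cases "i = j")
    case True
    have "(\<Prod>k\<in>UNIV. (if k = i \<and> k = j then s\<^sup>2 + (m$k - w$k)\<^sup>2 else if k = i then m$i - w$i
     else if k = j then m$j - w$j else 1)) = (\<Prod>k\<in>UNIV. (if k = i then s\<^sup>2 + (m$i - w$i)\<^sup>2 else 1))"
      using True by (intro prod.cong) auto
    then show ?thesis using True by (simp add: prod.delta power2_eq_square)
  next
    case False
    have "(\<Prod>k\<in>UNIV. (if k = i \<and> k = j then s\<^sup>2 + (m$k - w$k)\<^sup>2 else if k = i then m$i - w$i
     else if k = j then m$j - w$j else 1)) = (\<Prod>k\<in>UNIV. (if k = i then m$i - w$i else 1) * (if k = j then m$j - w$j else 1))"
      using False by (intro prod.cong) auto
    then show ?thesis using False by (simp add: prod.distrib prod.delta)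
  qed
  finally show "(\<integral>y. (y$i - w$i) * (y$j - w$j) * Gv s m y \<partial>lborel) = (if i = j then s\<^sup>2 else 0) + (m$i - w$i) * (m$j - w$j)" .
qed




lemma Gv_1:
  assumes s: "s > 0"
  shows "integrable lborel (\<lambda>y. y$i * Gv s m y)" "(\<integral>y. y$i * Gv s m y \<partial>lborel) = m$i"
proof -
  define \<phi> where "\<phi> = (\<lambda>k t. (if k = i then t - 0 else 1) * normal_density (m$k) s t)"
  have I: "has_bochner_integral lborel (\<phi> k) (if k = i then m$i else 1)" for k
    unfolding \<phi>_def using nd_lin[OF s, of 0 "m$i"] nd_0[OF s, of "m$k"] by (cases "k = i") auto
  have eq: "(\<Prod>k\<in>UNIV. \<phi> k (y$k)) = y$i * Gv s m y" for y
    unfolding \<phi>_def Gv_def prod.distrib by (simp add: prod.delta)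
  have intk: "integrable lborel (\<phi> k)" for k using I[of k] has_bochner_integral_iff by blast
  from vec_prod_lborel[of \<phi>, OF intk] eq
  show "integrable lborel (\<lambda>y. y$i * Gv s m y)" by simp
  have "(\<integral>y. y$i * Gv s m y \<partial>lborel) = (\<Prod>k\<in>UNIV. integral\<^sup>L lborel (\<phi> k))"
    using vec_prod_lborel(2)[of \<phi>, OF intk] eq by simp
  also have "\<dots> = (\<Prod>k\<in>UNIV. (if k = i then m$i else 1))"
    by (intro prod.cong refl has_bochner_integral_integral_eq[OF I])
  also have "\<dots> = m$i" by (simp add: prod.delta)
  finally show "(\<integral>y. y$i * Gv s m y \<partial>lborel) = m$i" .
qed

lemma poly_id:
  fixes a b s x y z K :: real
  assumes "K = a\<^sup>2 + s\<^sup>2 * b\<^sup>2"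
  shows "(a\<^sup>2 * (y - z)\<^sup>2 + s\<^sup>2 * (x - b*y)\<^sup>2) * K = s\<^sup>2 * a\<^sup>2 * (x - b*z)\<^sup>2 + (K*y - a\<^sup>2*z - s\<^sup>2*b*x)\<^sup>2"
  unfolding assms by algebra

lemma nd_split:
  fixes a b s x y z :: real
  assumes a: "a > 0" and s: "s > 0"
  defines "K \<equiv> a\<^sup>2 + s\<^sup>2 * b\<^sup>2"
  shows "normal_density 0 s (y - z) * normal_density 0 a (x - b*y)
       = normal_density 0 (sqrt K) (x - b*z) * normal_density ((a\<^sup>2 * z + s\<^sup>2 * b * x)/K) (s*a/sqrt K) y"
proof -
  have K: "K > 0" unfolding K_def using a by (simp add: add_pos_nonneg)
  have sK: "sqrt K > 0" using K by simp
  have sK2: "(sqrt K)\<^sup>2 = K" using K by simp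
  have pre: "sqrt (2 * pi * s\<^sup>2) * sqrt (2 * pi * a\<^sup>2) = sqrt (2 * pi * (sqrt K)\<^sup>2) * sqrt (2 * pi * (s * a / sqrt K)\<^sup>2)"
  proof -
    have "(2 * pi * s\<^sup>2) * (2 * pi * a\<^sup>2) = (2 * pi * (sqrt K)\<^sup>2) * (2 * pi * (s * a / sqrt K)\<^sup>2)"
      using sK sK2 by (simp add: field_simps power2_eq_square)
    then show ?thesis by (simp add: real_sqrt_mult[symmetric])
  qed
  have ex: "- ((y - z)\<^sup>2 / (2 * s\<^sup>2)) + - ((x - b*y)\<^sup>2 / (2 * a\<^sup>2))
     = - ((x - b*z)\<^sup>2 / (2 * (sqrt K)\<^sup>2)) + - ((y - (a\<^sup>2 * z + s\<^sup>2 * b * x)/K)\<^sup>2 / (2 * (s*a/sqrt K)\<^sup>2))"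
  proof -
    have e2: "(s*a/sqrt K)\<^sup>2 = s\<^sup>2 * a\<^sup>2 / K" using sK sK2 by (simp add: power_divide power_mult_distrib)
    have e3: "(y - (a\<^sup>2 * z + s\<^sup>2 * b * x)/K)\<^sup>2 = (K*y - a\<^sup>2*z - s\<^sup>2*b*x)\<^sup>2 / K\<^sup>2"
      using K by (simp add: field_simps power2_eq_square)
    define P where "P = K*y - a\<^sup>2*z - s\<^sup>2*b*x"
    have L: "- ((y - z)\<^sup>2 / (2 * s\<^sup>2)) + - ((x - b*y)\<^sup>2 / (2 * a\<^sup>2)) = - ((a\<^sup>2 * (y - z)\<^sup>2 + s\<^sup>2 * (x - b*y)\<^sup>2) / (2 * s\<^sup>2 * a\<^sup>2))"
      using a s by (simp add: field_simps)
    have L2: "(a\<^sup>2 * (y - z)\<^sup>2 + s\<^sup>2 * (x - b*y)\<^sup>2) / (2 * s\<^sup>2 * a\<^sup>2) = (s\<^sup>2 * a\<^sup>2 * (x - b*z)\<^sup>2 + P\<^sup>2) / (2 * s\<^sup>2 * a\<^sup>2 * K)"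
      using poly_id[OF K_def[THEN meta_eq_to_obj_eq], of y z x] K unfolding P_def
      by (simp add: divide_simps)
    have R: "- ((x - b*z)\<^sup>2 / (2 * K)) + - ((P\<^sup>2 / K\<^sup>2) / (2 * (s\<^sup>2 * a\<^sup>2 / K))) = - ((s\<^sup>2 * a\<^sup>2 * (x - b*z)\<^sup>2 + P\<^sup>2) / (2 * s\<^sup>2 * a\<^sup>2 * K))"
      using a s K by (simp add: field_simps power2_eq_square)
    show ?thesis unfolding sK2 e2 e3 P_def[symmetric] L L2 R ..
  qed
  show ?thesis
    unfolding normal_density_def
    using pre ex
    by (simp add: exp_add[symmetric] field_simps)
qed




lemma vec_nth_meas[measurable]: "(\<lambda>y::real^'n. y $ k) \<in> borel_measurable borel"
  by (intro borel_measurable_continuous_onI continuous_intros)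

lemma gauss_vec_meas[measurable]: "(\<lambda>y. gauss_vec r (f y)) \<in> borel_measurable M" if [measurable]: "f \<in> borel_measurable M"
  for f :: "_ \<Rightarrow> real^'n"
  unfolding gauss_vec_def normal_density_def by measurable

lemma Gv_meas[measurable]: "(\<lambda>y. Gv r (f y) (g y)) \<in> borel_measurable M" if [measurable]: "f \<in> borel_measurable M" "g \<in> borel_measurable M"
  for f g :: "_ \<Rightarrow> real^'n"
  unfolding Gv_def normal_density_def by measurable




lemma vec_split:
  fixes a b s :: real and x y z :: "real^'n"
  assumes a: "a > 0" and s: "s > 0"
  defines "K \<equiv> a\<^sup>2 + s\<^sup>2 * b\<^sup>2"
  shows "gauss_vec s (y - z) * gauss_vec a (x - b *\<^sub>R y)
     = gauss_vec (sqrt K) (x - b *\<^sub>R z) * Gv (s * a / sqrt K) ((a\<^sup>2/K) *\<^sub>R z + (s\<^sup>2 * b / K) *\<^sub>R x) y"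
proof -
  have "normal_density 0 s (y$k - z$k) * normal_density 0 a (x$k - b * y$k)
     = normal_density 0 (sqrt K) (x$k - b * z$k) * normal_density ((a\<^sup>2/K) * z$k + (s\<^sup>2 * b / K) * x$k) (s * a / sqrt K) (y$k)" for k
  proof -
    have "(a\<^sup>2/K) * z$k + (s\<^sup>2 * b / K) * x$k = (a\<^sup>2 * z$k + s\<^sup>2 * b * x$k) / K"
      by (simp add: add_divide_distrib)
    then show ?thesis using nd_split[OF a s, of "y$k" "z$k" "x$k" b] unfolding K_def by simp
  qed
  then show ?thesis unfolding gauss_vec_def Gv_def prod.distrib[symmetric] by simp
qed

lemma nd_cont: "r > 0 \<Longrightarrow> continuous_on S f \<Longrightarrow> continuous_on S (\<lambda>z. normal_density \<mu> r (f z))"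
  unfolding normal_density_def by (intro continuous_intros) auto
lemma gv_cont: "r > 0 \<Longrightarrow> continuous_on S f \<Longrightarrow> continuous_on S (\<lambda>z. gauss_vec r (f z :: real^'n))"
  unfolding gauss_vec_def by (intro continuous_intros nd_cont) auto

lemma bounded_on_cube:
  fixes g :: "real^'n \<Rightarrow> real"
  assumes "continuous_on (cbox 0 One) g"
  obtains C where "\<And>z. z \<in> cbox 0 One \<Longrightarrow> \<bar>g z\<bar> \<le> C"
proof -
  have "compact (g ` cbox 0 One)" by (rule compact_continuous_image[OF assms compact_cbox])
  then obtain C where "\<forall>v\<in>g ` cbox 0 One. norm v \<le> C" using compact_imp_bounded bounded_iff by metis
  then show ?thesis using that by auto
qed

lemma gauss_vec_nonneg: "s > 0 \<Longrightarrow> 0 \<le> gauss_vec s v"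
  unfolding gauss_vec_def by (intro prod_nonneg) (simp add: normal_density_nonneg)

lemma gauss_vec_pos: "s > 0 \<Longrightarrow> 0 < gauss_vec s v"
  unfolding gauss_vec_def by (intro prod_pos) (simp add: normal_density_pos)

lemma Gv_nonneg: "s > 0 \<Longrightarrow> 0 \<le> Gv s m v"
  unfolding Gv_def by (intro prod_nonneg) (simp add: normal_density_nonneg)

lemma Gv_Q:
  fixes m :: "real^'n"
  assumes s: "s > 0" and B: "B \<ge> 0"
  shows "has_bochner_integral lborel (\<lambda>y. (A + B * (\<Sum>k\<in>UNIV. (y$k)\<^sup>2)) * Gv s m y)
            (A + B * (\<Sum>k\<in>UNIV. s\<^sup>2 + (m$k)\<^sup>2))"
proof -
  have h0: "has_bochner_integral lborel (Gv s m) 1"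
    using Gv_0[OF s, of m] by (simp add: has_bochner_integral_iff)
  have h2: "has_bochner_integral lborel (\<lambda>y. (y$k - (0::real^'n)$k) * (y$k - (0::real^'n)$k) * Gv s m y) (s\<^sup>2 + (m$k - (0::real^'n)$k) * (m$k - (0::real^'n)$k))" for k
    using Gv_2[OF s, of k 0 k m] by (simp add: has_bochner_integral_iff)
  have "has_bochner_integral lborel (\<lambda>y. A * Gv s m y + B * (\<Sum>k\<in>UNIV. (y$k - (0::real^'n)$k) * (y$k - (0::real^'n)$k) * Gv s m y))
     (A * 1 + B * (\<Sum>k\<in>UNIV. s\<^sup>2 + (m$k - (0::real^'n)$k) * (m$k - (0::real^'n)$k)))"
    by (intro has_bochner_integral_add has_bochner_integral_mult_right has_bochner_integral_sum h0 h2)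
  then show ?thesis
    by (rule has_bochner_integral_cong[THEN iffD1, rotated -1])
       (auto simp: algebra_simps sum_distrib_left sum_distrib_right power2_eq_square)
qed

lemma fubini_gauss:
  fixes \<nu> :: "(real^'n) measure" and \<phi> :: "real^'n \<Rightarrow> real" and \<alpha> \<beta> :: "real \<Rightarrow> real" and x :: "real^'n"
  assumes P: "prob_space \<nu>" and sn: "sets \<nu> = sets borel" and supp: "AE z in \<nu>. z \<in> cbox 0 One"
    and a: "\<alpha> t > 0" and s: "\<sigma> > 0"
    and \<phi>m[measurable]: "\<phi> \<in> borel_measurable borel"
    and \<phi>b: "\<And>y. \<bar>\<phi> y\<bar> \<le> A + B * (\<Sum>k\<in>UNIV. (y$k)\<^sup>2)" and B: "B \<ge> 0"
    and K_def: "K = (\<alpha> t)\<^sup>2 + \<sigma>\<^sup>2 * (\<beta> t)\<^sup>2"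
    and H_def: "H = (\<lambda>z. gauss_vec (sqrt K) (x - \<beta> t *\<^sub>R z))"
    and G_def: "G = (\<lambda>z y. Gv (\<sigma> * \<alpha> t / sqrt K) (((\<alpha> t)\<^sup>2/K) *\<^sub>R z + (\<sigma>\<^sup>2 * \<beta> t / K) *\<^sub>R x) y)"
  shows "integrable lborel (\<lambda>y. \<phi> y * joint_density \<alpha> \<beta> \<sigma> \<nu> t x y)"
    "(\<integral>y. \<phi> y * joint_density \<alpha> \<beta> \<sigma> \<nu> t x y \<partial>lborel) = (\<integral>z. H z * (\<integral>y. \<phi> y * G z y \<partial>lborel) \<partial>\<nu>)"
    "integrable \<nu> (\<lambda>z. H z * (\<integral>y. \<phi> y * G z y \<partial>lborel))"
proof -
  interpret P: prob_space \<nu> by (rule P)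
  interpret ps: pair_sigma_finite \<nu> lborel by unfold_locales
  have K: "K > 0" unfolding K_def using a by (simp add: add_pos_nonneg)
  define \<rho> where "\<rho> = \<sigma> * \<alpha> t / sqrt K"
  have \<rho>: "\<rho> > 0" unfolding \<rho>_def using s a K by simp
  define m where "m = (\<lambda>z. ((\<alpha> t)\<^sup>2/K) *\<^sub>R z + (\<sigma>\<^sup>2 * \<beta> t / K) *\<^sub>R x)"
  have G: "G z y = Gv \<rho> (m z) y" for z y unfolding G_def \<rho>_def m_def ..
  have Hnn: "0 \<le> H z" for z unfolding H_def using K by (simp add: gauss_vec_nonneg)
  have Hpos: "0 < H z" for z unfolding H_def using K by (simp add: gauss_vec_pos)
  have Gnn: "0 \<le> G z y" for z y unfolding G using \<rho> by (simp add: Gv_nonneg)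
  define F where "F = (\<lambda>(z::real^'n, y::real^'n). \<phi> y * (H z * G z y))"
  have Fm: "F \<in> borel_measurable (\<nu> \<Otimes>\<^sub>M lborel)"
  proof -
    have "F \<in> borel_measurable (borel \<Otimes>\<^sub>M borel)"
      unfolding F_def H_def G_def by measurable
    then show ?thesis by (simp add: measurable_cong_sets[OF sets_pair_measure_cong[OF sn sets_lborel] refl])
  qed
  define g where "g = (\<lambda>z. H z * (A + B * (\<Sum>k\<in>UNIV. \<rho>\<^sup>2 + (m z$k)\<^sup>2)))"
  have Q: "has_bochner_integral lborel (\<lambda>y. H z * ((A + B * (\<Sum>k\<in>UNIV. (y$k)\<^sup>2)) * G z y)) (g z)" for z
    unfolding g_def G by (intro has_bochner_integral_mult_right Gv_Q \<rho> B)
  have Fbound: "norm (F (z, y)) \<le> H z * ((A + B * (\<Sum>k\<in>UNIV. (y$k)\<^sup>2)) * G z y)" for z y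
  proof -
    have "norm (F (z, y)) = \<bar>\<phi> y\<bar> * (H z * G z y)"
      unfolding F_def using Hnn Gnn by (simp add: abs_mult)
    also have "\<dots> \<le> (A + B * (\<Sum>k\<in>UNIV. (y$k)\<^sup>2)) * (H z * G z y)"
      by (intro mult_right_mono \<phi>b mult_nonneg_nonneg Hnn Gnn)
    finally show ?thesis by (simp add: ac_simps)
  qed
  have intF: "integrable lborel (\<lambda>y. F (z, y))" for z
  proof (rule Bochner_Integration.integrable_bound[OF Q[of z, unfolded has_bochner_integral_iff, THEN conjunct1]])
    show "(\<lambda>y. F (z, y)) \<in> borel_measurable lborel" unfolding F_def split H_def G_def by measurable
    show "AE y in lborel. norm (F (z, y)) \<le> norm (H z * ((A + B * (\<Sum>k\<in>UNIV. (y$k)\<^sup>2)) * G z y))"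
      using Fbound by (auto intro: order_trans[OF _ abs_ge_self])
  qed
  have normle: "(\<integral>y. norm (F (z, y)) \<partial>lborel) \<le> g z" for z
  proof -
    have "(\<integral>y. norm (F (z, y)) \<partial>lborel) \<le> (\<integral>y. H z * ((A + B * (\<Sum>k\<in>UNIV. (y$k)\<^sup>2)) * G z y) \<partial>lborel)"
      by (rule integral_mono[OF integrable_norm[OF intF] Q[of z, unfolded has_bochner_integral_iff, THEN conjunct1]]) (rule Fbound)
    then show ?thesis using has_bochner_integral_integral_eq[OF Q[of z]] by simp
  qed
  have gcont: "continuous_on (cbox 0 One) g"
    unfolding g_def H_def m_def using K by (intro continuous_intros gv_cont) auto
  obtain C where C: "\<And>z. z \<in> cbox 0 One \<Longrightarrow> \<bar>g z\<bar> \<le> C" using bounded_on_cube[OF gcont] by blast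
  have intnorm: "integrable \<nu> (\<lambda>z. \<integral>y. norm (F (z, y)) \<partial>lborel)"
  proof (rule P.integrable_const_bound[where B=C])
    show "AE z in \<nu>. norm (\<integral>y. norm (F (z, y)) \<partial>lborel) \<le> C"
      using supp
    proof eventually_elim
      case (elim z)
      have "0 \<le> (\<integral>y. norm (F (z, y)) \<partial>lborel)" by simp
      then show ?case using normle[of z] C[OF elim] by simp
    qed
    show "(\<lambda>z. \<integral>y. norm (F (z, y)) \<partial>lborel) \<in> borel_measurable \<nu>"
      using Fm by measurable
  qed
  have intP: "integrable (\<nu> \<Otimes>\<^sub>M lborel) F"
    by (rule ps.Fubini_integrable[OF Fm intnorm]) (simp add: intF)
  have intP': "integrable (\<nu> \<Otimes>\<^sub>M lborel) (case_prod (\<lambda>z y. \<phi> y * (H z * G z y)))"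
    using intP unfolding F_def .
  have Jeq: "\<phi> y * joint_density \<alpha> \<beta> \<sigma> \<nu> t x y = (\<integral>z. \<phi> y * (H z * G z y) \<partial>\<nu>)" for y
  proof -
    have "joint_density \<alpha> \<beta> \<sigma> \<nu> t x y = (\<integral>z. gauss_vec \<sigma> (y - z) * gauss_vec (\<alpha> t) (x - \<beta> t *\<^sub>R y) \<partial>\<nu>)"
      unfolding joint_density_def mu1_density_def by simp
    also have "\<dots> = (\<integral>z. H z * G z y \<partial>\<nu>)"
      unfolding H_def G_def K_def apply (rule Bochner_Integration.integral_cong[OF refl]) by (rule vec_split[OF a s])
    finally show ?thesis by simp
  qed
  have inner: "(\<integral>y. \<phi> y * (H z * G z y) \<partial>lborel) = H z * (\<integral>y. \<phi> y * G z y \<partial>lborel)" for z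
    by (simp add: ac_simps)
  show "integrable lborel (\<lambda>y. \<phi> y * joint_density \<alpha> \<beta> \<sigma> \<nu> t x y)"
    unfolding Jeq by (rule ps.integrable_snd[OF intP'])
  show "(\<integral>y. \<phi> y * joint_density \<alpha> \<beta> \<sigma> \<nu> t x y \<partial>lborel) = (\<integral>z. H z * (\<integral>y. \<phi> y * G z y \<partial>lborel) \<partial>\<nu>)"
    unfolding Jeq ps.Fubini_integral[OF intP'] inner ..
  show "integrable \<nu> (\<lambda>z. H z * (\<integral>y. \<phi> y * G z y \<partial>lborel))"
    using ps.integrable_fst'[OF intP] unfolding F_def split inner .
qed




lemma sq_le_sum: "(y$i)\<^sup>2 \<le> (\<Sum>k\<in>UNIV. (y$k)\<^sup>2)" for y :: "real^'n"
  by (rule member_le_sum) auto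

lemma lin_bound: "\<bar>y$i\<bar> \<le> 1 + 1 * (\<Sum>k\<in>UNIV. (y$k)\<^sup>2)" for y :: "real^'n"
proof -
  have "\<bar>y$i\<bar> \<le> 1 + (y$i)\<^sup>2"
  proof (cases "\<bar>y$i\<bar> \<le> 1")
    case True then show ?thesis by (simp add: add_increasing2)
  next
    case False
    then have "\<bar>y$i\<bar> * 1 \<le> \<bar>y$i\<bar> * \<bar>y$i\<bar>" by (intro mult_left_mono) auto
    then show ?thesis by (simp add: power2_eq_square abs_mult_self_eq)
  qed
  then show ?thesis using sq_le_sum[of y i] by simp
qed

lemma absprod: "\<bar>u * w\<bar> \<le> u\<^sup>2 + w\<^sup>2" for u w :: real
proof (cases "\<bar>u\<bar> \<le> \<bar>w\<bar>")
  case True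
  have "\<bar>u\<bar>*\<bar>w\<bar> \<le> \<bar>w\<bar>*\<bar>w\<bar>" by (rule mult_right_mono[OF True abs_ge_zero])
  moreover have "\<bar>w\<bar>*\<bar>w\<bar> = w\<^sup>2" by (simp add: power2_eq_square abs_mult_self_eq)
  moreover have "0 \<le> u\<^sup>2" by simp
  ultimately show ?thesis unfolding abs_mult by linarith
next
  case False
  have "\<bar>u\<bar>*\<bar>w\<bar> \<le> \<bar>u\<bar>*\<bar>u\<bar>" using False by (intro mult_left_mono) auto
  moreover have "\<bar>u\<bar>*\<bar>u\<bar> = u\<^sup>2" by (simp add: power2_eq_square abs_mult_self_eq)
  moreover have "0 \<le> w\<^sup>2" by simp
  ultimately show ?thesis unfolding abs_mult by linarith
qed

lemma quad_bound: "\<bar>(y$i - p) * (y$j - r)\<bar> \<le> (2*p\<^sup>2 + 2*r\<^sup>2) + 4 * (\<Sum>k\<in>UNIV. (y$k)\<^sup>2)" for y :: "real^'n"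
proof -
  have 1: "\<bar>u * w\<bar> \<le> u\<^sup>2 + w\<^sup>2" for u w :: real by (rule absprod)
  have 2: "(u - p)\<^sup>2 \<le> 2 * u\<^sup>2 + 2 * p\<^sup>2" for u p :: real
  proof -
    have "0 \<le> (u + p)\<^sup>2" by simp
    then show ?thesis by (simp add: power2_eq_square algebra_simps)
  qed
  show ?thesis using 1[of "y$i - p" "y$j - r"] 2[of "y$i" p] 2[of "y$j" r] sq_le_sum[of y i] sq_le_sum[of y j]
    by linarith
qed

lemma intcube:
  fixes \<nu> :: "(real^'n) measure" and g :: "real^'n \<Rightarrow> real"
  assumes P: "prob_space \<nu>" and supp: "AE z in \<nu>. z \<in> cbox 0 One"
    and c: "continuous_on (cbox 0 One) g" and gm: "g \<in> borel_measurable \<nu>"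
  shows "integrable \<nu> g"
proof -
  interpret P: prob_space \<nu> by (rule P)
  obtain C where C: "\<And>z. z \<in> cbox 0 One \<Longrightarrow> \<bar>g z\<bar> \<le> C" using bounded_on_cube[OF c] by blast
  show ?thesis
  proof (rule P.integrable_const_bound[where B=C, OF _ gm])
    show "AE z in \<nu>. norm (g z) \<le> C" using supp by eventually_elim (simp add: C)
  qed
qed

lemma quad_form: "v \<bullet> (A *v v) = (\<Sum>i\<in>UNIV. \<Sum>j\<in>UNIV. v$i * v$j * A$i$j)" for A :: "real^'n^'n"
proof -
  have "v \<bullet> (A *v v) = (\<Sum>i\<in>UNIV. v$i * (\<Sum>j\<in>UNIV. A$i$j * v$j))"
    unfolding inner_vec_def matrix_vector_mult_def by simp
  also have "\<dots> = (\<Sum>i\<in>UNIV. \<Sum>j\<in>UNIV. v$i * v$j * A$i$j)"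
    unfolding sum_distrib_left by (intro sum.cong refl) (simp only: mult.commute mult.left_commute)
  finally show ?thesis .
qed

lemma mat_scaled: "((c *\<^sub>R mat 1) :: real^'n^'n) $ i $ j = (if i = j then c else 0)"
  by (simp add: mat_def)

lemma quad_diag: "(\<Sum>i\<in>UNIV. \<Sum>j\<in>UNIV. v$i * v$j * (if i = j then c else 0)) = c * (v \<bullet> v)" for v :: "real^'n"
proof -
  have e: "v$i * v$j * (if i = j then c else 0) = (if i = j then v$i * v$i * c else 0)" for i j by auto
  have "(\<Sum>i\<in>UNIV. \<Sum>j\<in>UNIV. v$i * v$j * (if i = j then c else 0)) = (\<Sum>i\<in>UNIV. v$i * v$i * c)"
    unfolding e by (simp add: sum.delta)
  also have "\<dots> = c * (v \<bullet> v)" unfolding inner_vec_def sum_distrib_left by (simp add: mult.commute)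
  finally show ?thesis .
qed




lemma One_nth: "(\<Sum>x\<in>(Basis::(real^'n) set). x $ i) = 1"
  using sum_axis_nth[of "\<lambda>_. 1::real" i] by (simp add: sum_component)

theorem lemmaD:
  fixes \<alpha> \<beta> d\<alpha> dd\<alpha> d\<beta> dd\<beta> :: "real \<Rightarrow> real"
    and \<sigma> :: real
    and f :: "real^'n \<Rightarrow> ennreal"
    and \<nu> :: "(real^'n) measure"
  assumes \<sigma>_pos: "\<sigma> > 0"
    and \<nu>_def: "\<nu> = density lborel f"
    and f_meas: "f \<in> borel_measurable borel"
    and \<nu>_prob: "prob_space \<nu>"
    and \<nu>_supp: "emeasure \<nu> (- cbox 0 One) = 0"
    and \<alpha>_cont: "continuous_on {0..1} \<alpha>"
    and \<beta>_cont: "continuous_on {0..1} \<beta>"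
    and bd: "\<alpha> 0 = 1" "\<beta> 1 = 1" "\<alpha> 1 = 0" "\<beta> 0 = 0"
    and nondeg: "\<And>t. t \<in> {0..1} \<Longrightarrow> (\<alpha> t)\<^sup>2 + (\<beta> t)\<^sup>2 > 0"
    and \<alpha>_mono: "antimono_on {0..1} \<alpha>"
    and \<beta>_mono: "mono_on {0..1} \<beta>"
    and pos: "\<And>t. t \<in> {0<..<1} \<Longrightarrow> \<alpha> t > 0 \<and> \<beta> t > 0"
    and d\<alpha>: "\<And>t. t \<in> {0..<1} \<Longrightarrow> (\<alpha> has_real_derivative d\<alpha> t) (at t within {0..1})"
    and dd\<alpha>: "\<And>t. t \<in> {0..<1} \<Longrightarrow> (d\<alpha> has_real_derivative dd\<alpha> t) (at t within {0..1})"
    and d\<alpha>_cont: "continuous_on {0..<1} d\<alpha>"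
    and dd\<alpha>_cont: "continuous_on {0..<1} dd\<alpha>"
    and \<alpha>d\<alpha>_C1: "\<exists>g g'. (\<forall>t\<in>{0..<1}. g t = \<alpha> t * d\<alpha> t)
                    \<and> (\<forall>t\<in>{0..1}. (g has_real_derivative g' t) (at t within {0..1}))
                    \<and> continuous_on {0..1} g'"
    and d\<beta>: "\<And>t. t \<in> {0..1} \<Longrightarrow> (\<beta> has_real_derivative d\<beta> t) (at t within {0..1})"
    and dd\<beta>: "\<And>t. t \<in> {0..1} \<Longrightarrow> (d\<beta> has_real_derivative dd\<beta> t) (at t within {0..1})"
    and d\<beta>_cont: "continuous_on {0..1} d\<beta>"
    and dd\<beta>_cont: "continuous_on {0..1} dd\<beta>"
    and t: "t \<in> {0<..<1}"
  shows "((\<sigma>\<^sup>2 * (\<alpha> t)\<^sup>2 / ((\<alpha> t)\<^sup>2 + \<sigma>\<^sup>2 * (\<beta> t)\<^sup>2)) *\<^sub>R mat 1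
            \<preceq>\<^sub>L cond_cov \<alpha> \<beta> \<sigma> \<nu> t x)
       \<and> (cond_cov \<alpha> \<beta> \<sigma> \<nu> t x
            \<preceq>\<^sub>L (\<sigma>\<^sup>2 * (\<alpha> t)\<^sup>2 / ((\<alpha> t)\<^sup>2 + \<sigma>\<^sup>2 * (\<beta> t)\<^sup>2)) *\<^sub>R mat 1
                + (real CARD('n) * ((\<alpha> t)\<^sup>2 / ((\<alpha> t)\<^sup>2 + \<sigma>\<^sup>2 * (\<beta> t)\<^sup>2))\<^sup>2) *\<^sub>R mat 1)"
proof -
  interpret P: prob_space \<nu> by (rule \<nu>_prob)
  have sn: "sets \<nu> = sets borel" using \<nu>_def by simp
  have supp: "AE z in \<nu>. z \<in> cbox 0 One"
  proof (rule AE_I')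
    have "- cbox 0 One \<in> sets \<nu>" unfolding sn by (simp add: borel_open open_Compl)
    then show "- cbox (0::real^'n) One \<in> null_sets \<nu>" using \<nu>_supp by (simp add: null_sets_def)
  qed auto
  have a: "\<alpha> t > 0" using pos[OF t] by simp
  define K where "K = (\<alpha> t)\<^sup>2 + \<sigma>\<^sup>2 * (\<beta> t)\<^sup>2"
  define H where "H = (\<lambda>z. gauss_vec (sqrt K) (x - \<beta> t *\<^sub>R z))"
  define G where "G = (\<lambda>z y. Gv (\<sigma> * \<alpha> t / sqrt K) (((\<alpha> t)\<^sup>2/K) *\<^sub>R z + (\<sigma>\<^sup>2 * \<beta> t / K) *\<^sub>R x) (y::real^'n))"
  define \<rho> where "\<rho> = \<sigma> * \<alpha> t / sqrt K"
  define k0 where "k0 = (\<alpha> t)\<^sup>2/K"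
  define q where "q = (\<sigma>\<^sup>2 * \<beta> t / K) *\<^sub>R x"
  define m where "m = (\<lambda>z. k0 *\<^sub>R z + q)"
  have K: "K > 0" unfolding K_def using a by (simp add: add_pos_nonneg)
  have \<rho>: "\<rho> > 0" unfolding \<rho>_def using \<sigma>_pos a K by simp
  have k0: "k0 > 0" unfolding k0_def using a K by simp
  have G: "G z = Gv \<rho> (m z)" for z unfolding G_def \<rho>_def m_def k0_def q_def by auto
  have Hpos: "H z > 0" for z unfolding H_def using K by (simp add: gauss_vec_pos)
  have Hcont: "continuous_on S H" for S unfolding H_def using K by (intro continuous_intros gv_cont) auto
  have Hm[measurable]: "H \<in> borel_measurable borel" unfolding H_def by measurable
  have \<rho>2: "\<rho>\<^sup>2 = \<sigma>\<^sup>2 * (\<alpha> t)\<^sup>2 / ((\<alpha> t)\<^sup>2 + \<sigma>\<^sup>2 * (\<beta> t)\<^sup>2)"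
    unfolding \<rho>_def K_def[symmetric] using K by (simp add: power_divide power_mult_distrib)
  have k02: "k0 = (\<alpha> t)\<^sup>2 / ((\<alpha> t)\<^sup>2 + \<sigma>\<^sup>2 * (\<beta> t)\<^sup>2)" unfolding k0_def K_def ..
  note FG = fubini_gauss[where \<nu>=\<nu> and \<alpha>=\<alpha> and \<beta>=\<beta> and \<sigma>=\<sigma> and t=t and x=x and K=K and H=H and G=G, OF \<nu>_prob sn supp a \<sigma>_pos _ _ _ K_def H_def G_def]
  define J where "J = joint_density \<alpha> \<beta> \<sigma> \<nu> t x"
  define D where "D = (\<integral>y. J y \<partial>lborel)"
  have mcs: "f \<in> borel_measurable \<nu>" if "f \<in> borel_measurable borel" for f :: "real^'n \<Rightarrow> real"
    using that by (simp add: measurable_cong_sets[OF sn refl])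
  have intH: "integrable \<nu> H" by (rule intcube[OF \<nu>_prob supp Hcont]) (rule mcs, rule Hm)
  have intHz: "integrable \<nu> (\<lambda>z. H z * z$i)" for i
    by (rule intcube[OF \<nu>_prob supp]) (auto intro!: continuous_intros Hcont mcs)
  have D_eq: "D = (\<integral>z. H z \<partial>\<nu>)"
  proof -
    have "D = (\<integral>y. 1 * J y \<partial>lborel)" unfolding D_def by simp
    also have "\<dots> = (\<integral>z. H z * (\<integral>y. 1 * G z y \<partial>lborel) \<partial>\<nu>)"
      unfolding J_def by (rule FG(2)[where A=1 and B=0]) auto
    also have "\<dots> = (\<integral>z. H z \<partial>\<nu>)" unfolding G by (simp add: Gv_0(2)[OF \<rho>])
    finally show ?thesis .
  qed
  have Dpos: "D > 0"
  proof -
    have "0 \<le> D" unfolding D_eq using Hpos by (simp add: less_imp_le)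
    moreover have "D \<noteq> 0"
    proof
      assume "D = 0"
      then have "AE z in \<nu>. H z = 0" unfolding D_eq using integral_nonneg_eq_0_iff_AE[OF intH] Hpos
        by (simp add: less_imp_le)
      then have "AE z in \<nu>. False" using Hpos by (auto elim: eventually_mono simp: less_le)
      then show False by (simp add: P.AE_False)
    qed
    ultimately show ?thesis by simp
  qed
  define M where "M = cond_mean \<alpha> \<beta> \<sigma> \<nu> t x"
  define Z :: "real^'n" where "Z = (\<chi> i. (\<integral>z. H z * z$i \<partial>\<nu>) / D)"
  have cd: "cond_density \<alpha> \<beta> \<sigma> \<nu> t x y = J y / D" for y
    unfolding cond_density_def J_def D_def ..
  have M_eq: "M$i = k0 * Z$i + q$i" for i
  proof -
    have "M$i = (\<integral>y. y$i * J y \<partial>lborel) / D"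
      unfolding M_def cond_mean_def cd by simp
    also have "(\<integral>y. y$i * J y \<partial>lborel) = (\<integral>z. H z * (\<integral>y. y$i * G z y \<partial>lborel) \<partial>\<nu>)"
      unfolding J_def by (rule FG(2)[OF _ lin_bound]) auto
    also have "\<dots> = (\<integral>z. k0 * (H z * z$i) + q$i * H z \<partial>\<nu>)"
      unfolding G by (simp add: Gv_1(2)[OF \<rho>] m_def algebra_simps)
    also have "\<dots> = k0 * (\<integral>z. H z * z$i \<partial>\<nu>) + q$i * D"
      unfolding D_eq using intH intHz[of i] by simp
    finally show ?thesis using Dpos unfolding Z_def by (simp add: field_simps)
  qed
  have Zcube: "0 \<le> Z$i \<and> Z$i \<le> 1" for i
  proof -
    have "0 \<le> (\<integral>z. H z * z$i \<partial>\<nu>)"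
      using supp by (intro integral_nonneg_AE) (auto elim!: eventually_mono simp: mem_box_cart One_nth Hpos less_imp_le)
    moreover have "(\<integral>z. H z * z$i \<partial>\<nu>) \<le> (\<integral>z. H z \<partial>\<nu>)"
    proof (rule integral_mono_AE[OF intHz intH])
      show "AE z in \<nu>. H z * z$i \<le> H z" using supp
      proof eventually_elim
        case (elim z)
        then have "z$i \<le> 1" by (simp add: mem_box_cart One_nth)
        then show ?case using Hpos[of z] by (simp add: mult_left_le less_imp_le)
      qed
    qed
    ultimately show ?thesis unfolding Z_def D_eq[symmetric] using Dpos by (simp add: field_simps)
  qed
  define C where "C = cond_cov \<alpha> \<beta> \<sigma> \<nu> t x"
  define E where "E = (\<lambda>i j z. H z * ((if i = j then \<rho>\<^sup>2 else 0) + (m z$i - M$i) * (m z$j - M$j)))"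
  have C_eq: "C$i$j = (\<integral>z. E i j z \<partial>\<nu>) / D" and intE: "integrable \<nu> (E i j)" for i j
  proof -
    have b: "\<And>y. \<bar>(y$i - M$i) * (y$j - M$j)\<bar> \<le> (2*(M$i)\<^sup>2 + 2*(M$j)\<^sup>2) + 4 * (\<Sum>k\<in>UNIV. (y$k)\<^sup>2)"
      by (rule quad_bound)
    have inner: "(\<integral>y. (y$i - M$i) * (y$j - M$j) * G z y \<partial>lborel) = (if i = j then \<rho>\<^sup>2 else 0) + (m z$i - M$i) * (m z$j - M$j)" for z
      unfolding G by (rule Gv_2[OF \<rho>])
    have "C$i$j = (\<integral>y. (y$i - M$i) * (y$j - M$j) * J y \<partial>lborel) / D"
      unfolding C_def cond_cov_def Let_def M_def[symmetric] cd by simp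
    also have "(\<integral>y. (y$i - M$i) * (y$j - M$j) * J y \<partial>lborel) = (\<integral>z. E i j z \<partial>\<nu>)"
      unfolding J_def E_def inner[symmetric] by (rule FG(2)[OF _ b]) auto
    finally show "C$i$j = (\<integral>z. E i j z \<partial>\<nu>) / D" .
    show "integrable \<nu> (E i j)"
    proof -
      have bm: "(\<lambda>y::real^'n. (y$i - M$i) * (y$j - M$j)) \<in> borel_measurable borel" by measurable
      show ?thesis using FG(3)[OF bm b] unfolding E_def inner by simp
    qed
  qed
  define W where "W = (\<lambda>v z. H z * (\<rho>\<^sup>2 * (v \<bullet> v) + (v \<bullet> (m z - M))\<^sup>2))"
  have QF: "v \<bullet> (C *v v) = (\<integral>z. W v z \<partial>\<nu>) / D" and intW: "integrable \<nu> (W v)" for v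
  proof -
    have pw: "(\<Sum>i\<in>UNIV. \<Sum>j\<in>UNIV. v$i * v$j * E i j z) = W v z" for z
    proof -
      have "(\<Sum>i\<in>UNIV. \<Sum>j\<in>UNIV. v$i * v$j * E i j z)
         = (\<Sum>i\<in>UNIV. \<Sum>j\<in>UNIV. H z * (v$i * v$j * (if i = j then \<rho>\<^sup>2 else 0)) + H z * ((v$i * (m z$i - M$i)) * (v$j * (m z$j - M$j))))"
        unfolding E_def by (intro sum.cong refl) (simp add: algebra_simps)
      also have "\<dots> = H z * (\<Sum>i\<in>UNIV. \<Sum>j\<in>UNIV. v$i * v$j * (if i = j then \<rho>\<^sup>2 else 0))
           + H z * (\<Sum>i\<in>UNIV. \<Sum>j\<in>UNIV. (v$i * (m z$i - M$i)) * (v$j * (m z$j - M$j)))"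
        by (simp only: sum_distrib_left sum.distrib)
      also have "(\<Sum>i\<in>UNIV. \<Sum>j\<in>UNIV. (v$i * (m z$i - M$i)) * (v$j * (m z$j - M$j))) = (v \<bullet> (m z - M))\<^sup>2"
        unfolding power2_eq_square inner_vec_def sum_product by simp
      also have "H z * (\<Sum>i\<in>UNIV. \<Sum>j\<in>UNIV. v$i * v$j * (if i = j then \<rho>\<^sup>2 else 0)) + H z * (v \<bullet> (m z - M))\<^sup>2 = W v z"
        unfolding quad_diag W_def by (simp add: algebra_simps)
      finally show ?thesis .
    qed
    have "v \<bullet> (C *v v) = (\<Sum>i\<in>UNIV. \<Sum>j\<in>UNIV. v$i * v$j * ((\<integral>z. E i j z \<partial>\<nu>) / D))"
      unfolding quad_form C_eq ..
    also have "\<dots> = (\<integral>z. (\<Sum>i\<in>UNIV. \<Sum>j\<in>UNIV. v$i * v$j * E i j z) \<partial>\<nu>) / D"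
      using intE by (simp add: sum_divide_distrib)
    finally show "v \<bullet> (C *v v) = (\<integral>z. W v z \<partial>\<nu>) / D" unfolding pw .
    have "integrable \<nu> (\<lambda>z. \<Sum>i\<in>UNIV. \<Sum>j\<in>UNIV. v$i * v$j * E i j z)" using intE by simp
    then show "integrable \<nu> (W v)" unfolding pw .
  qed
  define c where "c = \<sigma>\<^sup>2 * (\<alpha> t)\<^sup>2 / ((\<alpha> t)\<^sup>2 + \<sigma>\<^sup>2 * (\<beta> t)\<^sup>2)"
  define dk where "dk = real CARD('n) * ((\<alpha> t)\<^sup>2 / ((\<alpha> t)\<^sup>2 + \<sigma>\<^sup>2 * (\<beta> t)\<^sup>2))\<^sup>2"
  have c\<rho>: "c = \<rho>\<^sup>2" unfolding c_def \<rho>2 ..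
  have lower: "c * (v \<bullet> v) \<le> v \<bullet> (C *v v)" for v
  proof -
    have "(\<integral>z. H z * (\<rho>\<^sup>2 * (v \<bullet> v)) \<partial>\<nu>) \<le> (\<integral>z. W v z \<partial>\<nu>)"
    proof (rule integral_mono[OF _ intW])
      show "integrable \<nu> (\<lambda>z. H z * (\<rho>\<^sup>2 * (v \<bullet> v)))" using intH by simp
      show "H z * (\<rho>\<^sup>2 * (v \<bullet> v)) \<le> W v z" for z
        unfolding W_def using Hpos[of z] by (intro mult_left_mono) auto
    qed
    then have "c * (v \<bullet> v) * D \<le> (\<integral>z. W v z \<partial>\<nu>)" unfolding D_eq c\<rho> by (simp add: ac_simps)
    then show ?thesis unfolding QF using Dpos by (simp add: field_simps)
  qed
  have dk: "dk = real CARD('n) * k0\<^sup>2" unfolding dk_def k02 ..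
  have diff: "m z - M = k0 *\<^sub>R (z - Z)" for z
    unfolding vec_eq_iff m_def using M_eq by (simp add: algebra_simps)
  have upper: "v \<bullet> (C *v v) \<le> (c + dk) * (v \<bullet> v)" for v
  proof -
    have "(\<integral>z. W v z \<partial>\<nu>) \<le> (\<integral>z. H z * ((c + dk) * (v \<bullet> v)) \<partial>\<nu>)"
    proof (rule integral_mono_AE[OF intW])
      show "integrable \<nu> (\<lambda>z. H z * ((c + dk) * (v \<bullet> v)))" using intH by simp
      show "AE z in \<nu>. W v z \<le> H z * ((c + dk) * (v \<bullet> v))" using supp
      proof eventually_elim
        case (elim z)
        have ww: "(z - Z) \<bullet> (z - Z) \<le> real CARD('n)"
        proof -
          have "(z - Z) \<bullet> (z - Z) = (\<Sum>i\<in>UNIV. (z$i - Z$i)\<^sup>2)" by (simp add: inner_vec_def power2_eq_square)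
          also have "\<dots> \<le> (\<Sum>i\<in>(UNIV::'n set). 1)"
          proof (rule sum_mono)
            fix i
            have "0 \<le> z$i" "z$i \<le> 1" using elim by (auto simp: mem_box_cart One_nth)
            then have "\<bar>z$i - Z$i\<bar> \<le> 1" using Zcube[of i] by auto
            then show "(z$i - Z$i)\<^sup>2 \<le> 1" using abs_square_le_1 by blast
          qed
          finally show ?thesis by simp
        qed
        have "(v \<bullet> (m z - M))\<^sup>2 = k0\<^sup>2 * (v \<bullet> (z - Z))\<^sup>2" unfolding diff by (simp add: power_mult_distrib)
        also have "\<dots> \<le> k0\<^sup>2 * ((v \<bullet> v) * ((z - Z) \<bullet> (z - Z)))"
          by (intro mult_left_mono Cauchy_Schwarz_ineq) simp
        also have "\<dots> \<le> k0\<^sup>2 * ((v \<bullet> v) * real CARD('n))"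
          by (intro mult_left_mono ww) auto
        finally have "(v \<bullet> (m z - M))\<^sup>2 \<le> dk * (v \<bullet> v)" unfolding dk by (simp add: ac_simps)
        then show ?case unfolding W_def c\<rho> using Hpos[of z] by (intro mult_left_mono) (auto simp: algebra_simps)
      qed
    qed
    then have "(\<integral>z. W v z \<partial>\<nu>) \<le> (c + dk) * (v \<bullet> v) * D" unfolding D_eq by (simp add: ac_simps)
    then show ?thesis unfolding QF using Dpos by (simp add: field_simps)
  qed
  have qm: "v \<bullet> ((A - B) *v v) = v \<bullet> (A *v v) - v \<bullet> (B *v v)" for A B :: "real^'n^'n" and v
    unfolding quad_form by (simp add: sum_subtractf algebra_simps)
  have qa: "v \<bullet> ((A + B) *v v) = v \<bullet> (A *v v) + v \<bullet> (B *v v)" for A B :: "real^'n^'n" and v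
    unfolding quad_form by (simp add: sum.distrib algebra_simps)
  have qs: "v \<bullet> ((e *\<^sub>R mat 1 :: real^'n^'n) *v v) = e * (v \<bullet> v)" for e v
    unfolding quad_form mat_scaled by (rule quad_diag)
  show ?thesis
    unfolding loewner_le_def psd_def C_def[symmetric] c_def[symmetric] dk_def[symmetric] qm qa qs
    using lower upper by (simp add: algebra_simps)
qed


end
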